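(* Each smooth function $K$ that Poisson commutes with $\xi$ and with $y\eta$ in a neighbourhood of a point $(x,y,\xi,\eta)=(x_0,0,0,0)$ is characterised by two smooth function germs $f_+,f_-\in C^\infty(\mathbb R^2,0)$ satisfying $f_-(\xi,t)-f_+(\xi,t)=O(t^\infty)$ locally uniformly in $\xi$, such that $$K(x,y,\xi,\eta)=\begin{cases}f_+(\xi,y\eta)&\text{if }y\ge0,\\ f_-(\xi,y\eta)&\text{if }y<0.\end{cases}$$
   Context: $(x,y,\xi,\eta)$ are canonical coordinates on $T^*\mathbb R^2$ (or on $T^*(S^1\times\mathbb R)$), with Poisson bracket $\{\cdot,\cdot\}$ induced by $d\xi\wedge dx+d\eta\wedge dy$. *)

theory Defs
  imports "HOL-Analysis.Analysis"
begin

fun Ck_on :: "nat \<Rightarrow> ('a::real_normed_vector \<Rightarrow> real) \<Rightarrow> 'a set \<Rightarrow> bool" where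
  "Ck_on 0 f S = continuous_on S f"
| "Ck_on (Suc n) f S =
     (\<exists>f'. (\<forall>x\<in>S. (f has_derivative f' x) (at x)) \<and> (\<forall>v. Ck_on n (\<lambda>x. f' x v) S))"

definition smooth_on :: "('a::real_normed_vector \<Rightarrow> real) \<Rightarrow> 'a set \<Rightarrow> bool" where
  "smooth_on f S \<longleftrightarrow> (\<forall>n. Ck_on n f S)"

text \<open>Points of T*R^2 are written (x, y, xi, eta).\<close>
type_synonym phase = "real \<times> real \<times> real \<times> real"

definition dx :: phase where "dx = (1, 0, 0, 0)"
definition dy :: phase where "dy = (0, 1, 0, 0)"
definition dxi :: phase where "dxi = (0, 0, 1, 0)"
definition deta :: phase where "deta = (0, 0, 0, 1)"

text \<open>Poisson bracket induced by d xi /\ dx + d eta /\ dy.\<close>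
definition poisson :: "(phase \<Rightarrow> real) \<Rightarrow> (phase \<Rightarrow> real) \<Rightarrow> phase \<Rightarrow> real" where
  "poisson F G p =
     frechet_derivative F (at p) dxi * frechet_derivative G (at p) dx
   - frechet_derivative F (at p) dx * frechet_derivative G (at p) dxi
   + frechet_derivative F (at p) deta * frechet_derivative G (at p) dy
   - frechet_derivative F (at p) dy * frechet_derivative G (at p) deta"

end

theory Submission
  imports Defs
begin


lemma Ck_affine:
  fixes L :: "'b::real_normed_vector \<Rightarrow> 'a::real_normed_vector"
  assumes "bounded_linear L"
  shows "Ck_on n f S \<Longrightarrow> (\<forall>w\<in>T. L w + c \<in> S) \<Longrightarrow> Ck_on n (\<lambda>w. f (L w + c)) T"
proof (induction n arbitrary: f)
  case 0
  have "continuous_on T (\<lambda>w. L w + c)"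
    using assms by (intro continuous_intros) (simp add: linear_continuous_on)
  then show ?case using 0 by (auto intro: continuous_on_compose2)
next
  case (Suc n)
  from Suc.prems(1) obtain f' where f': "\<forall>x\<in>S. (f has_derivative f' x) (at x)"
    and c: "\<forall>v. Ck_on n (\<lambda>x. f' x v) S" by auto
  have "\<forall>w\<in>T. ((\<lambda>w. f (L w + c)) has_derivative (\<lambda>v. f' (L w + c) (L v))) (at w)"
  proof
    fix w assume "w \<in> T"
    have "((\<lambda>w. L w + c) has_derivative L) (at w)"
      using assms by (auto intro!: derivative_eq_intros bounded_linear_imp_has_derivative)
    moreover have "(f has_derivative f' (L w + c)) (at (L w + c))"
      using f' Suc.prems(2) \<open>w \<in> T\<close> by auto
    ultimately show "((\<lambda>w. f (L w + c)) has_derivative (\<lambda>v. f' (L w + c) (L v))) (at w)"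
      by (rule has_derivative_compose)
  qed
  moreover have "\<forall>v. Ck_on n (\<lambda>w. f' (L w + c) (L v)) T"
    using Suc.IH c Suc.prems(2) by blast
  ultimately show ?case by auto
qed

lemma Ck_chain:
  fixes f :: "'a::real_normed_vector \<Rightarrow> real"
  shows "Ck_on n f S \<Longrightarrow> \<exists>\<phi>. \<phi> 0 = f \<and>
     (\<forall>k<n. \<forall>p t. p + t *\<^sub>R v \<in> S \<longrightarrow>
        ((\<lambda>t. \<phi> k (p + t *\<^sub>R v)) has_real_derivative \<phi> (Suc k) (p + t *\<^sub>R v)) (at t))
     \<and> (\<forall>k\<le>n. continuous_on S (\<phi> k))"
proof (induction n arbitrary: f)
  case 0
  then show ?case by (intro exI[of _ "\<lambda>k. f"]) auto
next
  case (Suc n)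
  from Suc.prems(1) obtain f' where f': "\<forall>x\<in>S. (f has_derivative f' x) (at x)"
    and c: "\<forall>v. Ck_on n (\<lambda>x. f' x v) S" by auto
  obtain \<psi> where p0: "\<psi> 0 = (\<lambda>x. f' x v)" and pd: "\<forall>k<n. \<forall>p t. p + t *\<^sub>R v \<in> S \<longrightarrow>
        ((\<lambda>t. \<psi> k (p + t *\<^sub>R v)) has_real_derivative \<psi> (Suc k) (p + t *\<^sub>R v)) (at t)"
    and pc: "\<forall>k\<le>n. continuous_on S (\<psi> k)"
    using Suc.IH c by blast
  define \<phi> where "\<phi> = case_nat f \<psi>"
  have cf: "continuous_on S f"
    using f' by (meson continuous_at_imp_continuous_on has_derivative_continuous)
  have d0: "((\<lambda>t. f (p + t *\<^sub>R v)) has_real_derivative f' (p + t *\<^sub>R v) v) (at t)"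
    if "p + t *\<^sub>R v \<in> S" for p t
  proof -
    have "((\<lambda>t. p + t *\<^sub>R v) has_derivative (\<lambda>h. h *\<^sub>R v)) (at t)"
      by (auto intro!: derivative_eq_intros)
    from has_derivative_compose[OF this] f' that
    have "((\<lambda>t. f (p + t *\<^sub>R v)) has_derivative (\<lambda>h. f' (p + t *\<^sub>R v) (h *\<^sub>R v))) (at t)"
      by auto
    moreover have "bounded_linear (f' (p + t *\<^sub>R v))"
      using f' that has_derivative_bounded_linear by blast
    then have "(\<lambda>h. f' (p + t *\<^sub>R v) (h *\<^sub>R v)) = (\<lambda>h. f' (p + t *\<^sub>R v) v * h)"
      by (simp add: fun_eq_iff linear_simps)
    ultimately show ?thesis by (simp add: has_field_derivative_def)
  qed
  show ?case
  proof (intro exI[of _ \<phi>] conjI allI impI)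
    show "\<phi> 0 = f" by (simp add: \<phi>_def)
  next
    fix k p t assume "k < Suc n" "p + t *\<^sub>R v \<in> S"
    then show "((\<lambda>t. \<phi> k (p + t *\<^sub>R v)) has_real_derivative \<phi> (Suc k) (p + t *\<^sub>R v)) (at t)"
      using d0 pd p0 by (cases k) (auto simp: \<phi>_def)
  next
    fix k assume "k \<le> Suc n"
    then show "continuous_on S (\<phi> k)"
      using cf pc by (cases k) (auto simp: \<phi>_def)
  qed
qed



lemma path_const:
  fixes K :: "'a::real_normed_vector \<Rightarrow> real"
  assumes "a \<le> b" "\<forall>\<tau>\<in>{a..b}. (\<gamma> has_vector_derivative \<gamma>' \<tau>) (at \<tau>)"
    "\<forall>\<tau>\<in>{a..b}. \<gamma> \<tau> \<in> U" "\<forall>p\<in>U. (K has_derivative K' p) (at p)"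
    "\<forall>\<tau>\<in>{a<..<b}. K' (\<gamma> \<tau>) (\<gamma>' \<tau>) = 0"
  shows "K (\<gamma> a) = K (\<gamma> b)"
proof (cases "a = b")
  case True then show ?thesis by simp
next
  case False
  then have ab: "a < b" using assms(1) by simp
  have d: "((\<lambda>t. K (\<gamma> t)) has_real_derivative K' (\<gamma> \<tau>) (\<gamma>' \<tau>)) (at \<tau>)" if "\<tau> \<in> {a..b}" for \<tau>
  proof -
    have g: "(\<gamma> has_vector_derivative \<gamma>' \<tau>) (at \<tau>)" using assms(2) that by auto
    have k: "(K has_derivative K' (\<gamma> \<tau>)) (at (\<gamma> \<tau>) within range \<gamma>)"
      using assms(3,4) that has_derivative_at_withinI by blast
    have "(K \<circ> \<gamma> has_vector_derivative K' (\<gamma> \<tau>) (\<gamma>' \<tau>)) (at \<tau>)"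
      using vector_derivative_diff_chain_within[OF g k] by simp
    then show ?thesis by (simp add: o_def has_real_derivative_iff_has_vector_derivative)
  qed
  have "continuous_on {a..b} (\<lambda>t. K (\<gamma> t))"
    using d by (meson DERIV_isCont continuous_at_imp_continuous_on)
  moreover have "\<And>x. a < x \<Longrightarrow> x < b \<Longrightarrow> ((\<lambda>t. K (\<gamma> t)) has_real_derivative 0) (at x)"
  proof -
    fix x assume "a < x" "x < b"
    then show "((\<lambda>t. K (\<gamma> t)) has_real_derivative 0) (at x)"
      using d[of x] assms(5) by auto
  qed
  ultimately have "K (\<gamma> b) = K (\<gamma> a)" by (rule DERIV_isconst_end[OF ab])
  then show ?thesis by simp
qed

lemma flat1:
  fixes \<psi> :: "nat \<Rightarrow> real \<Rightarrow> real"
  assumes "\<forall>k<N. \<forall>t\<in>{-\<delta>..\<delta>}. (\<psi> k has_real_derivative \<psi> (Suc k) t) (at t)"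
    "\<forall>k<N. \<psi> k 0 = 0" "\<forall>t\<in>{-\<delta>..\<delta>}. \<bar>\<psi> N t\<bar> \<le> M" "\<delta> \<ge> 0"
  shows "\<forall>t\<in>{-\<delta>..\<delta>}. \<bar>\<psi> 0 t\<bar> \<le> M * \<bar>t\<bar> ^ N"
proof -
  have M0: "M \<ge> 0" using assms(3,4) by force
  have "\<forall>t\<in>{-\<delta>..\<delta>}. \<bar>\<psi> (N - k) t\<bar> \<le> M * \<bar>t\<bar> ^ k" if "k \<le> N" for k
    using that
  proof (induction k)
    case 0 then show ?case using assms(3) by simp
  next
    case (Suc k)
    define j where "j = N - Suc k"
    have j: "j < N" "Suc j = N - k" using Suc.prems by (auto simp: j_def)
    show ?case
    proof
      fix t :: real assume t: "t \<in> {-\<delta>..\<delta>}"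
      have IH: "\<forall>t\<in>{-\<delta>..\<delta>}. \<bar>\<psi> (Suc j) t\<bar> \<le> M * \<bar>t\<bar> ^ k"
        using Suc j by simp
      have "\<bar>\<psi> j t\<bar> \<le> M * \<bar>t\<bar> ^ Suc k"
      proof (cases "t = 0")
        case True then show ?thesis using assms(2) j by simp
      next
        case False
        obtain z where z: "\<bar>z\<bar> \<le> \<bar>t\<bar>" "\<psi> j t - \<psi> j 0 = t * \<psi> (Suc j) z"
        proof (cases "t < 0")
          case True
          have "\<exists>z>t. z < 0 \<and> \<psi> j 0 - \<psi> j t = (0 - t) * \<psi> (Suc j) z"
            apply (rule MVT2[OF True])
            using assms(1) j t by auto
          then show ?thesis using that by (smt (verit, ccfv_threshold) mult_minus_left)
        next
          case ff: False
          then have "0 < t" using False by simp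
          have "\<exists>z>0. z < t \<and> \<psi> j t - \<psi> j 0 = (t - 0) * \<psi> (Suc j) z"
            apply (rule MVT2[OF \<open>0 < t\<close>])
            using assms(1) j t by auto
          then show ?thesis using that by force
        qed
        have zin: "z \<in> {-\<delta>..\<delta>}" using z(1) t by auto
        have "\<bar>\<psi> j t\<bar> = \<bar>t\<bar> * \<bar>\<psi> (Suc j) z\<bar>"
          using z(2) assms(2) j by (simp add: abs_mult)
        also have "\<dots> \<le> \<bar>t\<bar> * (M * \<bar>z\<bar> ^ k)"
          using IH zin by (simp add: mult_left_mono)
        also have "\<dots> \<le> \<bar>t\<bar> * (M * \<bar>t\<bar> ^ k)"
          using M0 z(1) by (intro mult_left_mono power_mono) auto
        finally show ?thesis by (simp add: algebra_simps)
      qed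
      then show "\<bar>\<psi> (N - Suc k) t\<bar> \<le> M * \<bar>t\<bar> ^ Suc k" by (simp add: j_def)
    qed
  qed
  from this[of N] show ?thesis by simp
qed

lemma zero_at0:
  fixes \<psi> :: "nat \<Rightarrow> real \<Rightarrow> real"
  assumes "\<forall>k<N. \<forall>t\<in>{-\<delta>..\<delta>}. (\<psi> k has_real_derivative \<psi> (Suc k) t) (at t)"
    "open I" "I \<subseteq> {-\<delta>..\<delta>}" "0 islimpt I" "\<forall>t\<in>I. \<psi> 0 t = 0" "0 \<in> {-\<delta>..\<delta>}"
  shows "\<forall>k<N. \<psi> k 0 = 0"
proof -
  have z: "\<forall>t\<in>I. \<psi> k t = 0" if "k < N" for k
    using that
  proof (induction k)
    case 0 then show ?case using assms(5) by simp
  next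
    case (Suc k)
    show ?case
    proof
      fix t assume t: "t \<in> I"
      obtain d where d: "d > 0" "ball t d \<subseteq> I" using assms(2) t openE by blast
      have "(\<psi> k has_real_derivative \<psi> (Suc k) t) (at t)"
        using assms(1,3) Suc.prems t by auto
      moreover have "\<forall>y. \<bar>t - y\<bar> < d \<longrightarrow> \<psi> k t = \<psi> k y"
        using Suc d t by (auto simp: dist_real_def subset_iff)
      ultimately show "\<psi> (Suc k) t = 0" using DERIV_local_const d(1) by blast
    qed
  qed
  show ?thesis
  proof (intro allI impI)
    fix k assume k: "k < N"
    have "isCont (\<psi> k) 0" using assms(1,6) k DERIV_isCont by blast
    then have "(\<psi> k \<longlongrightarrow> \<psi> k 0) (at 0 within I)"
      unfolding isCont_def using tendsto_within_subset[OF _ subset_UNIV] by blast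
    moreover have "(\<psi> k \<longlongrightarrow> 0) (at 0 within I)"
      using z[OF k] by (simp add: Lim_transform_within_set eventually_at_filter
          tendsto_eventually)
    moreover have "at 0 within I \<noteq> bot" using assms(4) trivial_limit_within by blast
    ultimately show "\<psi> k 0 = 0" using tendsto_unique by blast
  qed
qed

lemma bound_lemma:
  fixes f :: "'a::real_normed_vector \<Rightarrow> real" and m :: "'b::topological_space \<Rightarrow> 'a"
  assumes "continuous_on U f" "continuous_on UNIV m" "compact Q" "m ` Q \<subseteq> U"
  shows "\<exists>M. \<forall>w\<in>Q. \<bar>f (m w)\<bar> \<le> M"
proof -
  have "compact (m ` Q)" using assms(2,3) compact_continuous_image continuous_on_subset by blast
  then have "compact (f ` m ` Q)"
    using assms(1,4) compact_continuous_image continuous_on_subset by blast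
  then have "bounded (f ` m ` Q)" by (rule compact_imp_bounded)
  then show ?thesis by (auto simp: bounded_iff)
qed

lemma lin4:
  assumes "bounded_linear (L :: phase \<Rightarrow> real)"
  shows "L (a, b, c, d) = a * L dx + b * L dy + c * L dxi + d * L deta"
proof -
  have "(a, b, c, d) = a *\<^sub>R dx + b *\<^sub>R dy + c *\<^sub>R dxi + d *\<^sub>R deta"
    by (simp add: dx_def dy_def dxi_def deta_def)
  then show ?thesis using assms by (simp add: linear_simps)
qed



lemma vd4:
  assumes "(f1 has_real_derivative a) (at t)" "(f2 has_real_derivative b) (at t)"
    "(f3 has_real_derivative c) (at t)" "(f4 has_real_derivative d) (at t)"
  shows "((\<lambda>t. (f1 t, f2 t, f3 t, f4 t)) has_vector_derivative (a, b, c, d)) (at t)"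
  using assms by (intro has_vector_derivative_Pair; simp add: has_real_derivative_iff_has_vector_derivative)+

lemma pde:
  fixes K :: "phase \<Rightarrow> real"
  assumes "\<forall>p\<in>U. (K has_derivative K' p) (at p)"
    and "\<forall>p\<in>U. poisson K (\<lambda>(x, y, xi, eta). xi) p = 0"
    and "\<forall>p\<in>U. poisson K (\<lambda>(x, y, xi, eta). y * eta) p = 0"
  shows "\<forall>p\<in>U. K' p dx = 0"
    and "\<forall>x y xi eta. (x, y, xi, eta) \<in> U \<longrightarrow> eta * K' (x, y, xi, eta) deta = y * K' (x, y, xi, eta) dy"
proof -
  have G1: "(\<lambda>(x, y, xi, eta). xi) = (\<lambda>q::phase. fst (snd (snd q)))"
    by (auto simp: fun_eq_iff split: prod.split)
  have bl: "bounded_linear (\<lambda>q::phase. fst (snd (snd q)))"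
    by (intro bounded_linear_compose[OF bounded_linear_fst] bounded_linear_compose[OF bounded_linear_snd] bounded_linear_snd)
  have fG1: "frechet_derivative (\<lambda>(x, y, xi, eta). xi) (at p) = (\<lambda>q::phase. fst (snd (snd q)))" for p
    unfolding G1 by (rule frechet_derivative_at[symmetric], rule bounded_linear_imp_has_derivative[OF bl])
  have fK: "frechet_derivative K (at p) = K' p" if "p \<in> U" for p
    using assms(1) that frechet_derivative_at by (metis (no_types))
  show "\<forall>p\<in>U. K' p dx = 0"
  proof
    fix p assume "p \<in> U"
    then have "poisson K (\<lambda>(x, y, xi, eta). xi) p = 0" using assms(2) by blast
    then show "K' p dx = 0" unfolding poisson_def fK[OF \<open>p \<in> U\<close>] fG1
      by (simp add: dx_def dy_def dxi_def deta_def)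
  qed
  have G2: "(\<lambda>(x, y, xi, eta). y * eta) = (\<lambda>q::phase. fst (snd q) * snd (snd (snd q)))"
    by (auto simp: fun_eq_iff split: prod.split)
  have dG2: "((\<lambda>q::phase. fst (snd q) * snd (snd (snd q))) has_derivative
     (\<lambda>h. fst (snd p) * snd (snd (snd h)) + fst (snd h) * snd (snd (snd p)))) (at p)" for p :: phase
    by (auto intro!: derivative_eq_intros)
  have fG2: "frechet_derivative (\<lambda>(x, y, xi, eta). y * eta) (at p) =
     (\<lambda>h. fst (snd p) * snd (snd (snd h)) + fst (snd h) * snd (snd (snd p)))" for p :: phase
    unfolding G2 by (rule frechet_derivative_at[symmetric], rule dG2)
  show "\<forall>x y xi eta. (x, y, xi, eta) \<in> U \<longrightarrow> eta * K' (x, y, xi, eta) deta = y * K' (x, y, xi, eta) dy"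
  proof (intro allI impI)
    fix x y xi eta assume u: "(x, y, xi, eta) \<in> U"
    then show "eta * K' (x, y, xi, eta) deta = y * K' (x, y, xi, eta) dy"
    proof -
      have "poisson K (\<lambda>(x, y, xi, eta). y * eta) (x, y, xi, eta) = 0" using assms(3) u by blast
      then show ?thesis unfolding poisson_def fK[OF u] fG2
        by (simp add: dx_def dy_def dxi_def deta_def algebra_simps)
    qed
  qed
qed



theorem lemma2p9:
  fixes K :: "phase \<Rightarrow> real" and U :: "phase set" and x0 :: real
  assumes "open U" and "(x0, 0, 0, 0) \<in> U"
    and "smooth_on K U"
    and "\<forall>p\<in>U. poisson K (\<lambda>(x, y, xi, eta). xi) p = 0"
    and "\<forall>p\<in>U. poisson K (\<lambda>(x, y, xi, eta). y * eta) p = 0"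
  shows "\<exists>V W fp fm \<delta>. open V \<and> (x0, 0, 0, 0) \<in> V \<and> V \<subseteq> U
     \<and> open W \<and> (0::real, 0::real) \<in> W
     \<and> smooth_on fp W \<and> smooth_on fm W
     \<and> \<delta> > 0 \<and> {(xi, t). \<bar>xi\<bar> \<le> \<delta> \<and> \<bar>t\<bar> \<le> \<delta>} \<subseteq> W
     \<and> (\<forall>N::nat. \<exists>C. \<forall>xi t. \<bar>xi\<bar> \<le> \<delta> \<and> \<bar>t\<bar> \<le> \<delta> \<longrightarrow>
            \<bar>fm (xi, t) - fp (xi, t)\<bar> \<le> C * \<bar>t\<bar> ^ N)
     \<and> (\<forall>(x, y, xi, eta)\<in>V. (xi, y * eta) \<in> W \<and>
            K (x, y, xi, eta) = (if y \<ge> 0 then fp (xi, y * eta) else fm (xi, y * eta)))"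
proof -
  obtain e where e: "e > 0" "ball (x0, 0, 0, 0) e \<subseteq> U"
    using assms(1,2) openE by blast
  define r where "r = min 1 (e / 4)"
  have r: "r > 0" "r \<le> 1" "4 * r \<le> e" using e by (auto simp: r_def)
  define B where "B = {(x, y, xi, eta). \<bar>x - x0\<bar> < r \<and> \<bar>y\<bar> < r \<and> \<bar>xi\<bar> < r \<and> \<bar>eta\<bar> < r}"
  have BU: "B \<subseteq> U"
  proof
    fix q assume "q \<in> B"
    then obtain x y xi eta where q: "q = (x, y, xi, eta)" "\<bar>x - x0\<bar> < r" "\<bar>y\<bar> < r" "\<bar>xi\<bar> < r" "\<bar>eta\<bar> < r"
      by (auto simp: B_def)
    have "dist (x0, 0, 0, 0) q = norm (x0 - x, - y, - xi, - eta)"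
      by (simp add: q dist_norm)
    also have "\<dots> \<le> \<bar>x - x0\<bar> + (\<bar>y\<bar> + (\<bar>xi\<bar> + \<bar>eta\<bar>))"
      using norm_Pair_le[of "x0-x" "(-y,-xi,-eta)"] norm_Pair_le[of "-y" "(-xi,-eta)"]
        norm_Pair_le[of "-xi" "-eta"] by simp
    also have "\<dots> < e" using q r by simp
    finally show "q \<in> U" using e by auto
  qed
  from assms(3) have "Ck_on 1 K U" by (simp add: smooth_on_def)
  then obtain K' where K': "\<forall>p\<in>U. (K has_derivative K' p) (at p)" by auto
  have blK: "bounded_linear (K' p)" if "p \<in> U" for p
    using K' that has_derivative_bounded_linear by blast
  note pde1 = pde(1)[OF K' assms(4,5)] and pde2 = pde(2)[OF K' assms(4,5)]
  define s where "s = r / 2"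
  have s: "s > 0" "s < r" "s \<le> 1/2" using r by (auto simp: s_def)
  define V where "V = {(x, y, xi, eta). \<bar>x - x0\<bar> < r \<and> \<bar>y\<bar> < s \<and> \<bar>xi\<bar> < r \<and> \<bar>eta\<bar> < s}"
  have VB: "V \<subseteq> B" using s by (auto simp: V_def B_def)
  define fp where "fp = (\<lambda>w::real\<times>real. K (x0, s, fst w, snd w / s))"
  define fm where "fm = (\<lambda>w::real\<times>real. K (x0, - s, fst w, - snd w / s))"
  define W where "W = {(xi, t). \<bar>xi\<bar> < r \<and> \<bar>t\<bar> < r * s}"
  define \<delta> where "\<delta> = s * s / 4"
  have ss: "s * s \<le> s * (1/2)" using s by (intro mult_left_mono) auto
  have rs: "(s / 4) * s < r * s" using s by (intro mult_strict_right_mono) auto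
  have \<delta>: "\<delta> > 0" "\<delta> < s / 2" "\<delta> < r" "\<delta> < r * s"
    unfolding \<delta>_def using s ss rs by (simp, linarith, linarith, linarith)

  have invx: "K (x, y, xi, eta) = K (x0, y, xi, eta)" if "(x, y, xi, eta) \<in> B" for x y xi eta
  proof -
    define g where "g = (\<lambda>\<tau>::real. (x + \<tau> * (x0 - x), y, xi, eta))"
    have gU: "g \<tau> \<in> U" if "\<tau> \<in> {0..1}" for \<tau>
    proof -
      have "\<bar>x + \<tau> * (x0 - x) - x0\<bar> = (1 - \<tau>) * \<bar>x - x0\<bar>"
      proof -
        have "x + \<tau> * (x0 - x) - x0 = (1 - \<tau>) * (x - x0)" by (simp add: algebra_simps)
        then show ?thesis using that by (simp add: abs_mult)
      qed
      also have "\<dots> \<le> \<bar>x - x0\<bar>" using that by (simp add: mult_left_le_one_le)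
      finally show ?thesis using \<open>(x, y, xi, eta) \<in> B\<close> BU by (auto simp: B_def g_def)
    qed
    have "K (g 0) = K (g 1)"
    proof (rule path_const[where U = U and K' = K' and \<gamma>' = "\<lambda>_. (x0 - x, 0, 0, 0)" and \<gamma> = g
          and a = 0 and b = 1])
      show "\<forall>\<tau>\<in>{0..1}. (g has_vector_derivative (x0 - x, 0, 0, 0)) (at \<tau>)"
        unfolding g_def by (intro ballI vd4) (auto intro!: derivative_eq_intros)
      show "\<forall>\<tau>\<in>{0..1}. g \<tau> \<in> U" using gU by blast
      show "\<forall>\<tau>\<in>{0<..<1}. K' (g \<tau>) (x0 - x, 0, 0, 0) = 0"
      proof
        fix \<tau> :: real assume "\<tau> \<in> {0<..<1}"
        then have "g \<tau> \<in> U" using gU by auto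
        then show "K' (g \<tau>) (x0 - x, 0, 0, 0) = 0"
          using lin4[OF blK] pde1 by simp
      qed
    qed (use K' in auto)
    then show ?thesis by (simp add: g_def)
  qed
  have invf: "K (x0, y, xi, eta) = K (x0, Y, xi, eta * y / Y)"
    if "y * Y > 0" "\<bar>y\<bar> \<le> \<bar>Y\<bar>" "\<bar>Y\<bar> < r" "\<bar>xi\<bar> < r" "\<bar>eta\<bar> < r" for y Y xi eta
  proof -
    have q: "Y / y > 0" using that(1) by (auto simp: zero_less_mult_iff zero_less_divide_iff)
    have q1: "Y / y \<ge> 1"
    proof (cases "y > 0")
      case True
      then have "Y > 0" using that(1) by (auto simp: zero_less_mult_iff)
      then show ?thesis using True that(2) by (simp add: le_divide_eq_1_pos)
    next
      case False
      then have "y < 0" "Y < 0" using that(1) by (auto simp: zero_less_mult_iff)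
      then show ?thesis using that(2) by (simp add: le_divide_eq_1_neg)
    qed
    define T where "T = ln (Y / y)"
    have T: "T \<ge> 0" using q1 by (simp add: T_def)
    define g where "g = (\<lambda>\<tau>::real. (x0, y * exp \<tau>, xi, eta * exp (- \<tau>)))"
    have gU: "g \<tau> \<in> U" if "\<tau> \<in> {0..T}" for \<tau>
    proof -
      have "exp \<tau> \<le> Y / y" using that q by (simp add: T_def ln_ge_iff)
      then have "\<bar>y\<bar> * exp \<tau> \<le> \<bar>y\<bar> * (Y / y)" by (rule mult_left_mono) simp
      also have "\<bar>y\<bar> * (Y / y) = \<bar>Y\<bar>"
      proof -
        have "y \<noteq> 0" using \<open>0 < y * Y\<close> by auto
        then have "\<bar>Y\<bar> = \<bar>y * (Y / y)\<bar>" by simp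
        then show ?thesis using q by (metis abs_mult abs_of_pos)
      qed
      finally have 1: "\<bar>y * exp \<tau>\<bar> < r" using \<open>\<bar>Y\<bar> < r\<close> by (simp add: abs_mult)
      have "exp (- \<tau>) \<le> 1" using that by simp
      then have "\<bar>eta * exp (- \<tau>)\<bar> \<le> \<bar>eta\<bar>" by (simp add: abs_mult mult_left_le)
      then show ?thesis using 1 BU \<open>\<bar>xi\<bar> < r\<close> \<open>\<bar>eta\<bar> < r\<close> r(1) by (auto simp: B_def g_def)
    qed
    have "K (g 0) = K (g T)"
    proof (rule path_const[where U = U and K' = K' and \<gamma> = g and a = 0 and b = T
          and \<gamma>' = "\<lambda>\<tau>. (0, y * exp \<tau>, 0, - (eta * exp (- \<tau>)))"])
      show "\<forall>\<tau>\<in>{0..T}. (g has_vector_derivative (0, y * exp \<tau>, 0, - (eta * exp (- \<tau>)))) (at \<tau>)"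
        unfolding g_def by (intro ballI vd4) (auto intro!: derivative_eq_intros)
      show "\<forall>\<tau>\<in>{0..T}. g \<tau> \<in> U" using gU by blast
      show "\<forall>\<tau>\<in>{0<..<T}. K' (g \<tau>) (0, y * exp \<tau>, 0, - (eta * exp (- \<tau>))) = 0"
      proof
        fix \<tau> :: real assume "\<tau> \<in> {0<..<T}"
        then have u: "g \<tau> \<in> U" using gU by auto
        then have "eta * exp (- \<tau>) * K' (g \<tau>) deta = y * exp \<tau> * K' (g \<tau>) dy"
          using pde2 by (simp add: g_def)
        then show "K' (g \<tau>) (0, y * exp \<tau>, 0, - (eta * exp (- \<tau>))) = 0"
          using lin4[OF blK[OF u]] by simp
      qed
    qed (use K' T in auto)
    moreover have "g T = (x0, Y, xi, eta * y / Y)"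
    proof -
      have e1: "exp T = Y / y" using q by (simp add: T_def)
      have e2: "exp (- T) = y / Y" by (simp add: exp_minus e1)
      have "y \<noteq> 0" using that(1) by auto
      then show ?thesis by (simp add: g_def e1 e2)
    qed
    ultimately show ?thesis by (simp add: g_def)
  qed
  have axis: "K (g 0) = K (g c)"
    if gU: "\<forall>\<tau>. \<bar>\<tau>\<bar> < r \<longrightarrow> g \<tau> \<in> U" and gd: "\<forall>\<tau>. (g has_vector_derivative D) (at \<tau>)"
      and gz: "\<forall>\<tau>. \<bar>\<tau>\<bar> < r \<and> \<tau> \<noteq> 0 \<longrightarrow> K' (g \<tau>) D = 0" and c: "\<bar>c\<bar> < r"
    for g :: "real \<Rightarrow> phase" and D c
  proof (cases "c \<ge> 0")
    case True
    show ?thesis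
    proof (rule path_const[where U = U and K' = K' and \<gamma> = g and a = 0 and b = c and \<gamma>' = "\<lambda>_. D"])
      show "\<forall>\<tau>\<in>{0..c}. g \<tau> \<in> U" using gU c by auto
      show "\<forall>\<tau>\<in>{0<..<c}. K' (g \<tau>) D = 0" using gz c by auto
    qed (use True gd K' in auto)
  next
    case False
    have "K (g c) = K (g 0)"
    proof (rule path_const[where U = U and K' = K' and \<gamma> = g and a = c and b = 0 and \<gamma>' = "\<lambda>_. D"])
      show "\<forall>\<tau>\<in>{c..0}. g \<tau> \<in> U" using gU c by auto
      show "\<forall>\<tau>\<in>{c<..<0}. K' (g \<tau>) D = 0" using gz c by auto
    qed (use False gd K' in auto)
    then show ?thesis by simp
  qed
  have axE: "K (x0, 0, xi, c) = K (x0, 0, xi, 0)" if "\<bar>c\<bar> < r" "\<bar>xi\<bar> < r" for c xi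
  proof -
    have "K ((\<lambda>\<tau>. (x0, 0, xi, \<tau>)) 0) = K ((\<lambda>\<tau>. (x0, 0, xi, \<tau>)) c)"
    proof (rule axis[where D = "(0, 0, 0, 1)"])
      show "\<forall>\<tau>. \<bar>\<tau>\<bar> < r \<longrightarrow> (x0, 0, xi, \<tau>) \<in> U" using that BU r by (auto simp: B_def)
      show "\<forall>\<tau>. ((\<lambda>\<tau>. (x0, 0::real, xi, \<tau>)) has_vector_derivative (0, 0, 0, 1)) (at \<tau>)"
        by (intro allI vd4) (auto intro!: derivative_eq_intros)
      show "\<forall>\<tau>. \<bar>\<tau>\<bar> < r \<and> \<tau> \<noteq> 0 \<longrightarrow> K' (x0, 0, xi, \<tau>) (0, 0, 0, 1) = 0"
      proof (intro allI impI)
        fix \<tau> :: real assume h: "\<bar>\<tau>\<bar> < r \<and> \<tau> \<noteq> 0"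
        then have u: "(x0, 0, xi, \<tau>) \<in> U" using that BU r by (auto simp: B_def)
        then have "\<tau> * K' (x0, 0, xi, \<tau>) deta = 0" using pde2 by auto
        then show "K' (x0, 0, xi, \<tau>) (0, 0, 0, 1) = 0" using h by (simp add: deta_def)
      qed
    qed (use that in auto)
    then show ?thesis by simp
  qed
  have axY: "K (x0, c, xi, 0) = K (x0, 0, xi, 0)" if "\<bar>c\<bar> < r" "\<bar>xi\<bar> < r" for c xi
  proof -
    have "K ((\<lambda>\<tau>. (x0, \<tau>, xi, 0)) 0) = K ((\<lambda>\<tau>. (x0, \<tau>, xi, 0)) c)"
    proof (rule axis[where D = "(0, 1, 0, 0)"])
      show "\<forall>\<tau>. \<bar>\<tau>\<bar> < r \<longrightarrow> (x0, \<tau>, xi, 0) \<in> U" using that BU r by (auto simp: B_def)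
      show "\<forall>\<tau>. ((\<lambda>\<tau>. (x0, \<tau>, xi, 0::real)) has_vector_derivative (0, 1, 0, 0)) (at \<tau>)"
        by (intro allI vd4) (auto intro!: derivative_eq_intros)
      show "\<forall>\<tau>. \<bar>\<tau>\<bar> < r \<and> \<tau> \<noteq> 0 \<longrightarrow> K' (x0, \<tau>, xi, 0) (0, 1, 0, 0) = 0"
      proof (intro allI impI)
        fix \<tau> :: real assume h: "\<bar>\<tau>\<bar> < r \<and> \<tau> \<noteq> 0"
        then have u: "(x0, \<tau>, xi, 0) \<in> U" using that BU r by (auto simp: B_def)
        then have "\<tau> * K' (x0, \<tau>, xi, 0) dy = 0" using pde2 by force
        then show "K' (x0, \<tau>, xi, 0) (0, 1, 0, 0) = 0" using h by (simp add: dy_def)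
      qed
    qed (use that in auto)
    then show ?thesis by simp
  qed
  have fpm0: "fm (xi, 0) = fp (xi, 0)" if "\<bar>xi\<bar> < r" for xi
    using axY[of "-s" xi] axY[of s xi] that s by (simp add: fp_def fm_def)
  have inv: "K (x, y, xi, eta) = (if y \<ge> 0 then fp (xi, y * eta) else fm (xi, y * eta))"
    if "(x, y, xi, eta) \<in> V" for x y xi eta
  proof -
    have b: "\<bar>x - x0\<bar> < r" "\<bar>y\<bar> < s" "\<bar>xi\<bar> < r" "\<bar>eta\<bar> < s" using that by (auto simp: V_def)
    have "K (x, y, xi, eta) = K (x0, y, xi, eta)" using invx that VB by blast
    also have "\<dots> = (if y \<ge> 0 then fp (xi, y * eta) else fm (xi, y * eta))"
    proof (cases "y > 0")
      case True
      then have "K (x0, y, xi, eta) = K (x0, s, xi, eta * y / s)"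
        using b s by (intro invf) auto
      then show ?thesis using True by (simp add: fp_def mult.commute)
    next
      case f1: False
      show ?thesis
      proof (cases "y < 0")
        case True
        then have "K (x0, y, xi, eta) = K (x0, - s, xi, eta * y / - s)"
          using b s True mult_neg_pos[of y s] by (intro invf) auto
        then show ?thesis using True by (simp add: fm_def mult.commute)
      next
        case False
        then have y0: "y = 0" using f1 by simp
        have "K (x0, y, xi, eta) = K (x0, 0, xi, 0)" using axE[of eta xi] b s y0 by simp
        also have "\<dots> = K (x0, s, xi, 0)" using axY[of s xi] b s by simp
        finally show ?thesis using y0 by (simp add: fp_def)
      qed
    qed
    finally show ?thesis .
  qed
  define a where "a = s / 2"
  have a: "a > 0" "a < s" "\<delta> < a * s" using s \<delta> ss by (auto simp: a_def \<delta>_def)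
  define v1 where "v1 = ((0::real), 1 / a, (0::real), (0::real))"
  define v1' where "v1' = ((0::real), - 1 / a, (0::real), (0::real))"
  define v2 where "v2 = ((0::real), (0::real), (0::real), 1 / s)"
  have e1: "(x0, 0, xi, a) + t *\<^sub>R v1 = (x0, t / a, xi, a)" for xi t by (simp add: v1_def)
  have e1': "(x0, 0, xi, - a) + t *\<^sub>R v1' = (x0, - t / a, xi, - a)" for xi t by (simp add: v1'_def)
  have e2: "(x0, s, xi, 0) + t *\<^sub>R v2 = (x0, s, xi, t / s)" for xi t by (simp add: v2_def)
  have ta: "\<bar>t / a\<bar> < s" if "\<bar>t\<bar> \<le> \<delta>" for t
  proof -
    have "\<bar>t\<bar> < s * a" using that a by (simp add: mult.commute)
    then show ?thesis using a by (simp add: pos_divide_less_eq)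
  qed
  have ts: "\<bar>t / s\<bar> < r" if "\<bar>t\<bar> \<le> \<delta>" for t
  proof -
    have "\<bar>t\<bar> < r * s" using that \<delta> by simp
    then show ?thesis using s by (simp add: pos_divide_less_eq)
  qed
  have mem1: "(x0, 0, xi, a) + t *\<^sub>R v1 \<in> V" if "\<bar>xi\<bar> \<le> \<delta>" "\<bar>t\<bar> \<le> \<delta>" for xi t
    using ta[OF that(2)] that(1) \<delta> a r unfolding e1 by (auto simp: V_def)
  have mem1': "(x0, 0, xi, - a) + t *\<^sub>R v1' \<in> V" if "\<bar>xi\<bar> \<le> \<delta>" "\<bar>t\<bar> \<le> \<delta>" for xi t
    using ta[OF that(2)] that(1) \<delta> a r unfolding e1' by (auto simp: V_def)
  have mem2: "(x0, s, xi, 0) + t *\<^sub>R v2 \<in> B" if "\<bar>xi\<bar> \<le> \<delta>" "\<bar>t\<bar> \<le> \<delta>" for xi t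
    using ts[OF that(2)] that(1) \<delta> s r unfolding e2 by (auto simp: B_def)
  have flat: "\<exists>C. \<forall>xi t. \<bar>xi\<bar> \<le> \<delta> \<and> \<bar>t\<bar> \<le> \<delta> \<longrightarrow> \<bar>fm (xi, t) - fp (xi, t)\<bar> \<le> C * \<bar>t\<bar> ^ N" for N
  proof -
    have CN: "Ck_on N K U" using assms(3) by (simp add: smooth_on_def)
    obtain A where A0: "A 0 = K" and Ad: "\<forall>k<N. \<forall>p t. p + t *\<^sub>R v1 \<in> U \<longrightarrow>
        ((\<lambda>t. A k (p + t *\<^sub>R v1)) has_real_derivative A (Suc k) (p + t *\<^sub>R v1)) (at t)"
      and Ac: "\<forall>k\<le>N. continuous_on U (A k)" using Ck_chain[OF CN, of v1] by blast
    obtain A' where A'0: "A' 0 = K" and A'd: "\<forall>k<N. \<forall>p t. p + t *\<^sub>R v1' \<in> U \<longrightarrow>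
        ((\<lambda>t. A' k (p + t *\<^sub>R v1')) has_real_derivative A' (Suc k) (p + t *\<^sub>R v1')) (at t)"
      and A'c: "\<forall>k\<le>N. continuous_on U (A' k)" using Ck_chain[OF CN, of v1'] by blast
    obtain Bc where B0: "Bc 0 = K" and Bd: "\<forall>k<N. \<forall>p t. p + t *\<^sub>R v2 \<in> U \<longrightarrow>
        ((\<lambda>t. Bc k (p + t *\<^sub>R v2)) has_real_derivative Bc (Suc k) (p + t *\<^sub>R v2)) (at t)"
      and Bcc: "\<forall>k\<le>N. continuous_on U (Bc k)" using Ck_chain[OF CN, of v2] by blast
    define m1 where "m1 = (\<lambda>w::real\<times>real. (x0, 0, fst w, a) + snd w *\<^sub>R v1)"
    define m1' where "m1' = (\<lambda>w::real\<times>real. (x0, 0, fst w, - a) + snd w *\<^sub>R v1')"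
    define m2 where "m2 = (\<lambda>w::real\<times>real. (x0, s, fst w, 0) + snd w *\<^sub>R v2)"
    define Q where "Q = {-\<delta>..\<delta>} \<times> {-\<delta>..\<delta>}"
    have cQ: "compact Q" unfolding Q_def by (intro compact_Times compact_Icc)
    have inQ: "(xi, t) \<in> Q \<longleftrightarrow> \<bar>xi\<bar> \<le> \<delta> \<and> \<bar>t\<bar> \<le> \<delta>" for xi t
      by (auto simp: Q_def)
    obtain MA where MA: "\<forall>w\<in>Q. \<bar>A N (m1 w)\<bar> \<le> MA"
    proof -
      have "\<exists>M. \<forall>w\<in>Q. \<bar>A N (m1 w)\<bar> \<le> M"
      proof (rule bound_lemma[where f = "A N" and m = m1 and U = U, OF _ _ cQ])
        show "continuous_on U (A N)" using Ac by simp
        show "continuous_on UNIV m1"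
          unfolding m1_def m1'_def m2_def by (intro continuous_intros)
        show "m1 ` Q \<subseteq> U"
          using mem1 VB BU inQ unfolding m1_def by force
      qed
      then show ?thesis using that by blast
    qed
    obtain MA' where MA': "\<forall>w\<in>Q. \<bar>A' N (m1' w)\<bar> \<le> MA'"
    proof -
      have "\<exists>M. \<forall>w\<in>Q. \<bar>A' N (m1' w)\<bar> \<le> M"
      proof (rule bound_lemma[where f = "A' N" and m = m1' and U = U, OF _ _ cQ])
        show "continuous_on U (A' N)" using A'c by simp
        show "continuous_on UNIV m1'"
          unfolding m1_def m1'_def m2_def by (intro continuous_intros)
        show "m1' ` Q \<subseteq> U"
          using mem1' VB BU inQ unfolding m1'_def by force
      qed
      then show ?thesis using that by blast
    qed
    obtain MB where MB: "\<forall>w\<in>Q. \<bar>Bc N (m2 w)\<bar> \<le> MB"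
    proof -
      have "\<exists>M. \<forall>w\<in>Q. \<bar>Bc N (m2 w)\<bar> \<le> M"
      proof (rule bound_lemma[where f = "Bc N" and m = m2 and U = U, OF _ _ cQ])
        show "continuous_on U (Bc N)" using Bcc by simp
        show "continuous_on UNIV m2"
          unfolding m1_def m1'_def m2_def by (intro continuous_intros)
        show "m2 ` Q \<subseteq> U"
          using mem2 BU inQ unfolding m2_def by force
      qed
      then show ?thesis using that by blast
    qed
    define C where "C = \<bar>MA\<bar> + \<bar>MA'\<bar> + \<bar>MB\<bar>"
    have C0: "C \<ge> 0" by (simp add: C_def)
    show ?thesis
    proof (intro exI[of _ C] allI impI)
      fix xi t :: real assume h: "\<bar>xi\<bar> \<le> \<delta> \<and> \<bar>t\<bar> \<le> \<delta>"
      define \<psi>1 where "\<psi>1 = (\<lambda>k t. A k ((x0, 0, xi, a) + t *\<^sub>R v1) - Bc k ((x0, s, xi, 0) + t *\<^sub>R v2))"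
      define \<psi>2 where "\<psi>2 = (\<lambda>k t. A' k ((x0, 0, xi, - a) + t *\<^sub>R v1') - Bc k ((x0, s, xi, 0) + t *\<^sub>R v2))"
      have d1: "\<forall>k<N. \<forall>t\<in>{-\<delta>..\<delta>}. (\<psi>1 k has_real_derivative \<psi>1 (Suc k) t) (at t)"
      proof (intro allI impI ballI)
        fix k t assume k: "k < N" and t: "t \<in> {-\<delta>..\<delta>}"
        have tt: "\<bar>t\<bar> \<le> \<delta>" using t by auto
        have "(x0, 0, xi, a) + t *\<^sub>R v1 \<in> U" "(x0, s, xi, 0) + t *\<^sub>R v2 \<in> U"
          using mem1[OF _ tt] mem2[OF _ tt] h VB BU by auto
        then show "(\<psi>1 k has_real_derivative \<psi>1 (Suc k) t) (at t)"
          unfolding \<psi>1_def using Ad Bd k by (intro DERIV_diff) auto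
      qed
      have d2: "\<forall>k<N. \<forall>t\<in>{-\<delta>..\<delta>}. (\<psi>2 k has_real_derivative \<psi>2 (Suc k) t) (at t)"
      proof (intro allI impI ballI)
        fix k t assume k: "k < N" and t: "t \<in> {-\<delta>..\<delta>}"
        have tt: "\<bar>t\<bar> \<le> \<delta>" using t by auto
        have "(x0, 0, xi, - a) + t *\<^sub>R v1' \<in> U" "(x0, s, xi, 0) + t *\<^sub>R v2 \<in> U"
          using mem1'[OF _ tt] mem2[OF _ tt] h VB BU by auto
        then show "(\<psi>2 k has_real_derivative \<psi>2 (Suc k) t) (at t)"
          unfolding \<psi>2_def using A'd Bd k by (intro DERIV_diff) auto
      qed
      have b1: "\<forall>t\<in>{-\<delta>..\<delta>}. \<bar>\<psi>1 N t\<bar> \<le> C"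
      proof
        fix t assume t: "t \<in> {-\<delta>..\<delta>}"
        then have "(xi, t) \<in> Q" using h inQ by auto
        then have "\<bar>A N ((x0, 0, xi, a) + t *\<^sub>R v1)\<bar> \<le> MA" "\<bar>Bc N ((x0, s, xi, 0) + t *\<^sub>R v2)\<bar> \<le> MB"
          using MA MB unfolding m1_def m2_def by fastforce+
        then show "\<bar>\<psi>1 N t\<bar> \<le> C" unfolding \<psi>1_def C_def by linarith
      qed
      have b2: "\<forall>t\<in>{-\<delta>..\<delta>}. \<bar>\<psi>2 N t\<bar> \<le> C"
      proof
        fix t assume t: "t \<in> {-\<delta>..\<delta>}"
        then have "(xi, t) \<in> Q" using h inQ by auto
        then have "\<bar>A' N ((x0, 0, xi, - a) + t *\<^sub>R v1')\<bar> \<le> MA'" "\<bar>Bc N ((x0, s, xi, 0) + t *\<^sub>R v2)\<bar> \<le> MB"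
          using MA' MB unfolding m1'_def m2_def by fastforce+
        then show "\<bar>\<psi>2 N t\<bar> \<le> C" unfolding \<psi>2_def C_def by linarith
      qed
      have xir: "\<bar>xi\<bar> < r" using h \<delta> by linarith
      have v1: "\<psi>1 0 t = fm (xi, t) - fp (xi, t)" if "t < 0" "\<bar>t\<bar> \<le> \<delta>" for t
      proof -
        have "K (x0, t / a, xi, a) = fm (xi, t)"
          using inv[of x0 "t / a" xi a] mem1[of xi t] h that a divide_neg_pos[of t a] unfolding e1
          by simp
        then show ?thesis unfolding \<psi>1_def A0 B0 e1 e2 by (simp add: fp_def)
      qed
      have v2: "\<psi>2 0 t = fm (xi, t) - fp (xi, t)" if "t > 0" "\<bar>t\<bar> \<le> \<delta>" for t
      proof -
        have "K (x0, - t / a, xi, - a) = fm (xi, t)"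
          using inv[of x0 "- t / a" xi "- a"] mem1'[of xi t] h that a unfolding e1'
          by (simp add: divide_le_0_iff)
        then show ?thesis unfolding \<psi>2_def A'0 B0 e1' e2 by (simp add: fp_def)
      qed
      have z1: "\<forall>t\<in>{0<..<\<delta>}. \<psi>1 0 t = 0"
      proof
        fix t assume t: "t \<in> {0<..<\<delta>}"
        have "K (x0, t / a, xi, a) = fp (xi, t)"
          using inv[of x0 "t / a" xi a] mem1[of xi t] h t a \<delta> by (simp add: e1)
        then show "\<psi>1 0 t = 0" unfolding \<psi>1_def A0 B0 e1 e2 by (simp add: fp_def)
      qed
      have z2: "\<forall>t\<in>{-\<delta><..<0}. \<psi>2 0 t = 0"
      proof
        fix t assume t: "t \<in> {-\<delta><..<0}"
        have "K (x0, - t / a, xi, - a) = fp (xi, t)"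
          using inv[of x0 "- t / a" xi "- a"] mem1'[of xi t] h t a \<delta> by (simp add: e1' divide_le_0_iff)
        then show "\<psi>2 0 t = 0" unfolding \<psi>2_def A'0 B0 e1' e2 by (simp add: fp_def)
      qed
      have 01: "\<forall>k<N. \<psi>1 k 0 = 0"
        by (rule zero_at0[OF d1 open_greaterThanLessThan _ islimpt_greaterThanLessThan1 z1])
          (use \<delta> in auto)
      have 02: "\<forall>k<N. \<psi>2 k 0 = 0"
        by (rule zero_at0[OF d2 open_greaterThanLessThan _ islimpt_greaterThanLessThan2 z2])
          (use \<delta> in auto)
      have f1: "\<forall>t\<in>{-\<delta>..\<delta>}. \<bar>\<psi>1 0 t\<bar> \<le> C * \<bar>t\<bar> ^ N"
        using flat1[OF d1 01 b1] \<delta> by simp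
      have f2: "\<forall>t\<in>{-\<delta>..\<delta>}. \<bar>\<psi>2 0 t\<bar> \<le> C * \<bar>t\<bar> ^ N"
        using flat1[OF d2 02 b2] \<delta> by simp
      consider "t < 0" | "t = 0" | "t > 0" by linarith
      then show "\<bar>fm (xi, t) - fp (xi, t)\<bar> \<le> C * \<bar>t\<bar> ^ N"
      proof cases
        case 1
        have "t \<in> {-\<delta>..\<delta>}" using h by auto
        then show ?thesis using bspec[OF f1] v1[OF 1] h by metis
      next
        case 2 then show ?thesis using fpm0[OF xir] C0 by simp
      next
        case 3
        have "t \<in> {-\<delta>..\<delta>}" using h by auto
        then show ?thesis using bspec[OF f2] v2[OF 3] h by metis
      qed
    qed
  qed
  have oV: "open V"
  proof -
    have "V = {q. \<bar>fst q - x0\<bar> < r} \<inter> {q. \<bar>fst (snd q)\<bar> < s} \<inter> {q. \<bar>fst (snd (snd q))\<bar> < r}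
        \<inter> {q. \<bar>snd (snd (snd q))\<bar> < s}" by (auto simp: V_def)
    also have "open \<dots>" by (intro open_Int open_Collect_less continuous_intros)
    finally show ?thesis .
  qed
  have oW: "open W"
  proof -
    have "W = {q. \<bar>fst q\<bar> < r} \<inter> {q. \<bar>snd q\<bar> < r * s}" by (auto simp: W_def)
    also have "open \<dots>" by (intro open_Int open_Collect_less continuous_intros)
    finally show ?thesis .
  qed
  define L where "L = (\<lambda>w::real\<times>real. ((0::real), (0::real), fst w, snd w / s))"
  have bL: "bounded_linear L"
    unfolding L_def
    by (intro bounded_linear_Pair bounded_linear_zero bounded_linear_fst
        bounded_linear_compose[OF bounded_linear_divide bounded_linear_snd])
  define L' where "L' = (\<lambda>w::real\<times>real. ((0::real), (0::real), fst w, - snd w / s))"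
  have bL': "bounded_linear L'"
    unfolding L'_def
    by (intro bounded_linear_Pair bounded_linear_zero bounded_linear_fst
        bounded_linear_compose[OF bounded_linear_divide bounded_linear_minus[OF bounded_linear_snd]])
  have Wts: "\<bar>snd w / s\<bar> < r" if "w \<in> W" for w
  proof -
    have "\<bar>snd w\<bar> < r * s" using that by (auto simp: W_def)
    then show ?thesis using s by (simp add: pos_divide_less_eq)
  qed
  have sfp: "smooth_on fp W"
    unfolding smooth_on_def
  proof
    fix n
    have "Ck_on n (\<lambda>w. K (L w + (x0, s, 0, 0))) W"
    proof (rule Ck_affine[OF bL])
      show "Ck_on n K U" using assms(3) by (simp add: smooth_on_def)
      show "\<forall>w\<in>W. L w + (x0, s, 0, 0) \<in> U"
        using Wts BU s by (auto simp: L_def B_def W_def)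
    qed
    moreover have "(\<lambda>w. K (L w + (x0, s, 0, 0))) = fp" by (simp add: L_def fp_def)
    ultimately show "Ck_on n fp W" by simp
  qed
  have sfm: "smooth_on fm W"
    unfolding smooth_on_def
  proof
    fix n
    have "Ck_on n (\<lambda>w. K (L' w + (x0, - s, 0, 0))) W"
    proof (rule Ck_affine[OF bL'])
      show "Ck_on n K U" using assms(3) by (simp add: smooth_on_def)
      show "\<forall>w\<in>W. L' w + (x0, - s, 0, 0) \<in> U"
        using Wts BU s by (auto simp: L'_def B_def W_def)
    qed
    moreover have "(\<lambda>w. K (L' w + (x0, - s, 0, 0))) = fm" by (simp add: L'_def fm_def)
    ultimately show "Ck_on n fm W" by simp
  qed
  have sqW: "{(xi, t). \<bar>xi\<bar> \<le> \<delta> \<and> \<bar>t\<bar> \<le> \<delta>} \<subseteq> W"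
    using \<delta> by (auto simp: W_def)
  have last: "\<forall>(x, y, xi, eta)\<in>V. (xi, y * eta) \<in> W \<and>
            K (x, y, xi, eta) = (if y \<ge> 0 then fp (xi, y * eta) else fm (xi, y * eta))"
  proof (clarify)
    fix x y xi eta assume h: "(x, y, xi, eta) \<in> V"
    have b: "\<bar>y\<bar> < s" "\<bar>xi\<bar> < r" "\<bar>eta\<bar> < s" using h by (auto simp: V_def)
    have "\<bar>y * eta\<bar> \<le> s * s" unfolding abs_mult using b by (intro mult_mono) auto
    also have "\<dots> < r * s" using s by simp
    finally have "(xi, y * eta) \<in> W" using b by (simp add: W_def)
    then show "(xi, y * eta) \<in> W \<and>
            K (x, y, xi, eta) = (if y \<ge> 0 then fp (xi, y * eta) else fm (xi, y * eta))"
      using inv[OF h] by simp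
  qed
  have p0V: "(x0, 0, 0, 0) \<in> V" using r s by (simp add: V_def)
  have p0W: "(0::real, 0::real) \<in> W" using r s by (simp add: W_def)
  show ?thesis
    apply (rule exI[of _ V], rule exI[of _ W], rule exI[of _ fp], rule exI[of _ fm], rule exI[of _ \<delta>])
    using oV p0V VB BU oW p0W sfp sfm \<delta>(1) sqW flat last by blast
qed

end
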